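(* Let $U\subseteq\mathbb{R}^4$ be open with coordinates $(x^1,x^2,x^3,x^4)$ and let $a,b,p,q,s$ be real constants with $a^2+b^2\neq0$. Consider the Lorentzian metric $$g=2\,dx^1dx^4+(dx^2)^2+(dx^3)^2+\Big(x^4\big(a(x^2)^2+b(x^3)^2\big)+p(x^2)^2+2qx^2x^3+s(x^3)^2\Big)(dx^4)^2$$ on $U$. Then $(U,g)$ belongs to class $\mathcal{B}$, i.e. its Ricci tensor is a Codazzi tensor.
   Context: A pseudo-Riemannian manifold belongs to Gray's class $\mathcal{B}$ if its Ricci tensor $\varrho$ satisfies $(\nabla_X\varrho)(Y,Z)=(\nabla_Y\varrho)(X,Z)$ for all vector fields $X,Y,Z$, where $\nabla$ is the Levi-Civita connection. *)

theory Defs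
  imports "HOL-Analysis.Analysis"
begin

definition partial :: "'n::finite \<Rightarrow> (real^'n \<Rightarrow> real) \<Rightarrow> real^'n \<Rightarrow> real" where
  "partial i f x = deriv (\<lambda>t. f (x + t *\<^sub>R axis i 1)) 0"

fun partials :: "'n::finite list \<Rightarrow> (real^'n \<Rightarrow> real) \<Rightarrow> real^'n \<Rightarrow> real" where
  "partials [] f = f"
| "partials (i # is) f = partial i (partials is f)"

definition smooth_on :: "(real^'n::finite) set \<Rightarrow> (real^'n \<Rightarrow> real) \<Rightarrow> bool" where
  "smooth_on U f \<longleftrightarrow> (\<forall>is. partials is f differentiable_on U)"

text \<open>A metric in coordinates: g x i j is the component g_ij at the point x.\<close>
type_synonym 'n metric = "real^'n \<Rightarrow> 'n \<Rightarrow> 'n \<Rightarrow> real"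

definition pseudo_riemannian :: "(real^'n::finite) set \<Rightarrow> 'n metric \<Rightarrow> bool" where
  "pseudo_riemannian U g \<longleftrightarrow> open U \<and>
     (\<forall>i j. smooth_on U (\<lambda>x. g x i j)) \<and>
     (\<forall>x\<in>U. \<forall>i j. g x i j = g x j i) \<and>
     (\<forall>x\<in>U. det (\<chi> i j. g x i j) \<noteq> 0)"

definition ginv :: "('n::finite) metric \<Rightarrow> real^'n \<Rightarrow> 'n \<Rightarrow> 'n \<Rightarrow> real" where
  "ginv g x i j = matrix_inv (\<chi> a b. g x a b) $ i $ j"

text \<open>Christoffel symbols of the Levi-Civita connection: christoffel g x k i j = Gamma^k_ij.\<close>
definition christoffel :: "('n::finite) metric \<Rightarrow> real^'n \<Rightarrow> 'n \<Rightarrow> 'n \<Rightarrow> 'n \<Rightarrow> real" where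
  "christoffel g x k i j = (1/2) * (\<Sum>l\<in>UNIV. ginv g x k l *
      (partial i (\<lambda>y. g y j l) x + partial j (\<lambda>y. g y i l) x - partial l (\<lambda>y. g y i j) x))"

text \<open>Ricci tensor Ric_jk = R^i_{ijk} (contraction of the Riemann tensor).\<close>
definition ricci :: "('n::finite) metric \<Rightarrow> real^'n \<Rightarrow> 'n \<Rightarrow> 'n \<Rightarrow> real" where
  "ricci g x j k = (\<Sum>i\<in>UNIV.
      partial i (\<lambda>y. christoffel g y i j k) x - partial j (\<lambda>y. christoffel g y i i k) x
      + (\<Sum>p\<in>UNIV. christoffel g x i i p * christoffel g x p j k
                   - christoffel g x i j p * christoffel g x p i k))"

definition nabla_ricci :: "('n::finite) metric \<Rightarrow> real^'n \<Rightarrow> 'n \<Rightarrow> 'n \<Rightarrow> 'n \<Rightarrow> real" where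
  "nabla_ricci g x i j k = partial i (\<lambda>y. ricci g y j k) x
     - (\<Sum>p\<in>UNIV. christoffel g x p i j * ricci g x p k)
     - (\<Sum>p\<in>UNIV. christoffel g x p i k * ricci g x j p)"

text \<open>Gray's class B: the Ricci tensor is Codazzi, (nabla_X Ric)(Y,Z) = (nabla_Y Ric)(X,Z),
  written in coordinates (equivalent by tensoriality).\<close>
definition class_B :: "(real^'n::finite) set \<Rightarrow> 'n metric \<Rightarrow> bool" where
  "class_B U g \<longleftrightarrow> pseudo_riemannian U g \<and>
     (\<forall>x\<in>U. \<forall>i j k. nabla_ricci g x i j k = nabla_ricci g x j i k)"

text \<open>The metric of the theorem. Indices 1,2,3,4 of type 4 (note 4 = 0 in the numeral type,
  but 1,2,3,4 are the four distinct elements).\<close>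
definition paper_metric :: "real \<Rightarrow> real \<Rightarrow> real \<Rightarrow> real \<Rightarrow> real \<Rightarrow> 4 metric" where
  "paper_metric a b p q s x i j =
     (if (i = 1 \<and> j = 4) \<or> (i = 4 \<and> j = 1) then 1
      else if i = j \<and> (i = 2 \<or> i = 3) then 1
      else if i = 4 \<and> j = 4 then
        x$4 * (a * (x$2)^2 + b * (x$3)^2) + p * (x$2)^2 + 2 * q * x$2 * x$3 + s * (x$3)^2
      else 0)"

end

theory Submission imports Defs begin

definition dl :: "4 \<Rightarrow> 4 \<Rightarrow> real" where "dl i k = (if i = k then 1 else 0)"

lemma axis_comp: "(x + t  *\<^sub>R axis i (1::real)) $ k = x $ k + t   *  dl i k"
  by (auto simp: axis_def dl_def)

lemma partial_I:
  assumes "((\<lambda>t. f (x + t  *\<^sub>R axis i 1)) has_real_derivative D) (at 0)"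
  shows "partial i f x = D"
  using assms unfolding partial_def by (rule DERIV_imp_deriv)

definition Fm :: "real \<Rightarrow> real \<Rightarrow> real \<Rightarrow> real \<Rightarrow> real \<Rightarrow> real^4 \<Rightarrow> real" where
  "Fm a b p q s x = x$4   *  (a   *  (x$2)^2 + b   *  (x$3)^2) + p   *  (x$2)^2 + 2   *  q   *  x$2   *  x$3 + s   *  (x$3)^2"

definition dF :: "real \<Rightarrow> real \<Rightarrow> real \<Rightarrow> real \<Rightarrow> real \<Rightarrow> 4 \<Rightarrow> real^4 \<Rightarrow> real" where
  "dF a b p q s i y = dl i 2   *  (2  * a  * y$4  * y$2 + 2  * p  * y$2 + 2  * q  * y$3)
     + dl i 3   *  (2  * b  * y$4  * y$3 + 2  * q  * y$2 + 2  * s  * y$3) + dl i 4   *  (a  * (y$2)^2 + b  * (y$3)^2)"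

definition ddF :: "real \<Rightarrow> real \<Rightarrow> real \<Rightarrow> real \<Rightarrow> real \<Rightarrow> 4 \<Rightarrow> 4 \<Rightarrow> real^4 \<Rightarrow> real" where
  "ddF a b p q s l i y = dl i 2   *  (2  * a  * (dl l 4  * y$2 + y$4  * dl l 2) + 2  * p  * dl l 2 + 2  * q  * dl l 3)
     + dl i 3   *  (2  * b  * (dl l 4  * y$3 + y$4  * dl l 3) + 2  * q  * dl l 2 + 2  * s  * dl l 3)
     + dl i 4   *  (2  * a  * y$2  * dl l 2 + 2  * b  * y$3  * dl l 3)"

lemma Fm_deriv: "((\<lambda>t. Fm a b p q s (x + t  *\<^sub>R axis i 1)) has_real_derivative dF a b p q s i x) (at 0)"
  unfolding Fm_def axis_comp
  by (rule derivative_eq_intros refl | simp)+ (simp add: dF_def algebra_simps power2_eq_square)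

lemma dF_deriv: "((\<lambda>t. dF a b p q s m (x + t  *\<^sub>R axis l 1)) has_real_derivative ddF a b p q s l m x) (at 0)"
  unfolding dF_def axis_comp
  by (rule derivative_eq_intros refl | simp)+ (simp add: ddF_def algebra_simps power2_eq_square)

lemma metric_eq: "paper_metric a b p q s y i j = (if (i = 1 \<and> j = 4) \<or> (i = 4 \<and> j = 1) then 1
      else if i = j \<and> (i = 2 \<or> i = 3) then 1 else if i = 4 \<and> j = 4 then Fm a b p q s y else 0)"
  unfolding paper_metric_def Fm_def by simp

lemma partial_const: "partial i (\<lambda>y. c) x = 0"
  by (rule partial_I) simp

lemma partial_metric: "partial l (\<lambda>y. paper_metric a b p q s y i j) x = (if i = 4 \<and> j = 4 then dF a b p q s l x else 0)"
proof (cases "i = 4 \<and> j = 4")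
  case True
  then have "(\<lambda>y. paper_metric a b p q s y i j) = Fm a b p q s" by (auto simp: metric_eq)
  then show ?thesis using True by (simp add: partial_I[OF Fm_deriv])
next
  case False
  then have "(\<lambda>y. paper_metric a b p q s y i j) = (\<lambda>y. paper_metric a b p q s 0 i j)" by (auto simp: metric_eq)
  then show ?thesis using False by (auto simp: partial_const)
qed

definition Gi :: "real \<Rightarrow> real \<Rightarrow> real \<Rightarrow> real \<Rightarrow> real \<Rightarrow> real^4 \<Rightarrow> 4 \<Rightarrow> 4 \<Rightarrow> real" where
  "Gi a b p q s y k l = (if k = 1 \<and> l = 1 then - Fm a b p q s y else if (k = 1 \<and> l = 4) \<or> (k = 4 \<and> l = 1) then 1
      else if k = l \<and> (k = 2 \<or> k = 3) then 1 else 0)"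

lemma inv1: "(\<chi> i j. paper_metric a b p q s y i j) ** (\<chi> i j. Gi a b p q s y i j) = mat 1"
  unfolding vec_eq_iff matrix_matrix_mult_def mat_def
  by (simp add: sum_4 forall_4 metric_eq Gi_def)

lemma inv2: "(\<chi> i j. Gi a b p q s y i j) ** (\<chi> i j. paper_metric a b p q s y i j) = mat 1"
  unfolding vec_eq_iff matrix_matrix_mult_def mat_def
  by (simp add: sum_4 forall_4 metric_eq Gi_def)

lemma matrix_inv_eqI:
  fixes A B :: "real^'n^'n"
  assumes "A ** B = mat 1" "B ** A = mat 1"
  shows "matrix_inv A = B"
proof -
  let ?C = "matrix_inv A"
  have "A ** ?C = mat 1 \<and> ?C ** A = mat 1"
    unfolding matrix_inv_def by (rule someI[of _ B]) (use assms in auto)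
  then have "?C ** A = mat 1" by auto
  then have "?C = ?C ** (A ** B)" using assms by (simp add: matrix_mul_rid)
  also have "\<dots> = (?C ** A) ** B" by (simp add: matrix_mul_assoc)
  also have "\<dots> = B" using \<open>?C ** A = mat 1\<close> by (simp add: matrix_mul_lid)
  finally show ?thesis .
qed

lemma ginv_eq: "ginv (paper_metric a b p q s) y k l = Gi a b p q s y k l"
  unfolding ginv_def using matrix_inv_eqI[OF inv1 inv2] by simp

lemma det_nz: "det (\<chi> i j. paper_metric a b p q s y i j) \<noteq> 0"
  using inv1 invertible_det_nz invertible_right_inverse by blast

definition Gam :: "real \<Rightarrow> real \<Rightarrow> real \<Rightarrow> real \<Rightarrow> real \<Rightarrow> real^4 \<Rightarrow> 4 \<Rightarrow> 4 \<Rightarrow> 4 \<Rightarrow> real" where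
  "Gam a b p q s y k i j = dl k 1 * (dl j 4 * dF a b p q s i y + dl i 4 * dF a b p q s j y
        - dl i 4 * dl j 4 * dF a b p q s 4 y) / 2
     - (dl k 2 + dl k 3) * dl i 4 * dl j 4 * dF a b p q s k y / 2"

definition dGam :: "real \<Rightarrow> real \<Rightarrow> real \<Rightarrow> real \<Rightarrow> real \<Rightarrow> 4 \<Rightarrow> real^4 \<Rightarrow> 4 \<Rightarrow> 4 \<Rightarrow> 4 \<Rightarrow> real" where
  "dGam a b p q s l y k i j = dl k 1 * (dl j 4 * ddF a b p q s l i y + dl i 4 * ddF a b p q s l j y
        - dl i 4 * dl j 4 * ddF a b p q s l 4 y) / 2
     - (dl k 2 + dl k 3) * dl i 4 * dl j 4 * ddF a b p q s l k y / 2"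

lemma dF_1: "dF a b p q s 1 y = 0" by (simp add: dF_def dl_def)

lemma christoffel_eq: "christoffel (paper_metric a b p q s) y k i j = Gam a b p q s y k i j"
  unfolding christoffel_def ginv_eq partial_metric sum_4 Gam_def Gi_def
  using exhaust_4[of k] exhaust_4[of i] exhaust_4[of j]
  by (elim disjE) (simp_all add: dl_def dF_1)

lemma partial_Gam: "partial l (\<lambda>y. Gam a b p q s y k i j) x = dGam a b p q s l x k i j"
  unfolding Gam_def dGam_def
  apply (rule partial_I)
  apply (rule derivative_eq_intros dF_deriv refl | simp)+
  apply (simp add: algebra_simps)
  done

definition Ric :: "real \<Rightarrow> real \<Rightarrow> real \<Rightarrow> real \<Rightarrow> real \<Rightarrow> real^4 \<Rightarrow> 4 \<Rightarrow> 4 \<Rightarrow> real" where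
  "Ric a b p q s y j k = - dl j 4 * dl k 4 * ((a + b) * y$4 + p + s)"

lemma ddF_simps:
  "ddF a b p q s l 1 y = 0" "ddF a b p q s 1 m y = 0"
  "ddF a b p q s 2 2 y = 2 * a * y$4 + 2 * p" "ddF a b p q s 3 2 y = 2 * q" "ddF a b p q s 4 2 y = 2 * a * y$2"
  "ddF a b p q s 2 3 y = 2 * q" "ddF a b p q s 3 3 y = 2 * b * y$4 + 2 * s" "ddF a b p q s 4 3 y = 2 * b * y$3"
  "ddF a b p q s 2 4 y = 2 * a * y$2" "ddF a b p q s 3 4 y = 2 * b * y$3" "ddF a b p q s 4 4 y = 0"
  by (simp_all add: ddF_def dl_def)

lemma ricci_eq: "ricci (paper_metric a b p q s) y j k = Ric a b p q s y j k"
proof -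
  have "(\<lambda>y. christoffel (paper_metric a b p q s) y i j k) = (\<lambda>y. Gam a b p q s y i j k)" for i j k
    by (simp add: christoffel_eq)
  then have e: "ricci (paper_metric a b p q s) y j k = (\<Sum>i\<in>UNIV.
      dGam a b p q s i y i j k - dGam a b p q s j y i i k
      + (\<Sum>r\<in>UNIV. Gam a b p q s y i i r * Gam a b p q s y r j k
                   - Gam a b p q s y i j r * Gam a b p q s y r i k))"
    unfolding ricci_def christoffel_eq partial_Gam by simp
  show ?thesis
    unfolding e
    unfolding sum_4 Gam_def dGam_def Ric_def
    using exhaust_4[of j] exhaust_4[of k]
    by (elim disjE; simp add: dl_def dF_1 ddF_simps; simp add: field_simps)
qed

lemma partial_Ric: "partial l (\<lambda>y. Ric a b p q s y j k) x = - dl j 4 * dl k 4 * (a + b) * dl l 4"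
  unfolding Ric_def
  apply (rule partial_I)
  unfolding axis_comp
  apply (rule derivative_eq_intros refl | simp)+
  done

lemma nabla_eq: "nabla_ricci (paper_metric a b p q s) y i j k = - dl i 4 * dl j 4 * dl k 4 * (a + b)"
proof -
  have "(\<lambda>y. ricci (paper_metric a b p q s) y j k) = (\<lambda>y. Ric a b p q s y j k)" for j k
    by (simp add: ricci_eq)
  then have e: "nabla_ricci (paper_metric a b p q s) y i j k =
     - dl j 4 * dl k 4 * (a + b) * dl i 4
     - (\<Sum>r\<in>UNIV. Gam a b p q s y r i j * Ric a b p q s y r k)
     - (\<Sum>r\<in>UNIV. Gam a b p q s y r i k * Ric a b p q s y j r)"
    unfolding nabla_ricci_def ricci_eq christoffel_eq partial_Ric by simp
  show ?thesis
    unfolding e sum_4 Gam_def Ric_def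
    by (simp add: dl_def)
qed

inductive polyfun :: "(real^4 \<Rightarrow> real) \<Rightarrow> bool" where
  pconst: "polyfun (\<lambda>x. c)"
| pcoord: "polyfun (\<lambda>x. x $ k)"
| padd: "polyfun f \<Longrightarrow> polyfun g \<Longrightarrow> polyfun (\<lambda>x. f x + g x)"
| pmul: "polyfun f \<Longrightarrow> polyfun g \<Longrightarrow> polyfun (\<lambda>x. f x * g x)"

lemma polyfun_deriv:
  assumes "polyfun f"
  shows "\<exists>h. polyfun h \<and> (\<forall>x. ((\<lambda>t. f (x + t *\<^sub>R axis i 1)) has_real_derivative h x) (at 0))"
  using assms
proof induction
  case (pconst c)
  show ?case by (rule exI[of _ "\<lambda>x. 0"]) (auto intro: polyfun.intros)
next
  case (pcoord k)
  show ?case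
    apply (rule exI[of _ "\<lambda>x. dl i k"])
    apply (auto intro: polyfun.intros simp: axis_comp)
    apply (rule derivative_eq_intros refl | simp)+
    apply (simp add: axis_def dl_def)
    done
next
  case (padd f g)
  then obtain h1 h2 where h: "polyfun h1" "\<forall>x. ((\<lambda>t. f (x + t *\<^sub>R axis i 1)) has_real_derivative h1 x) (at 0)"
    "polyfun h2" "\<forall>x. ((\<lambda>t. g (x + t *\<^sub>R axis i 1)) has_real_derivative h2 x) (at 0)" by blast
  show ?case
    apply (rule exI[of _ "\<lambda>x. h1 x + h2 x"])
    using h by (auto intro: polyfun.intros DERIV_add)
next
  case (pmul f g)
  then obtain h1 h2 where h: "polyfun h1" "\<forall>x. ((\<lambda>t. f (x + t *\<^sub>R axis i 1)) has_real_derivative h1 x) (at 0)"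
    "polyfun h2" "\<forall>x. ((\<lambda>t. g (x + t *\<^sub>R axis i 1)) has_real_derivative h2 x) (at 0)" by blast
  show ?case
  proof (rule exI[of _ "\<lambda>x. f x * h2 x + h1 x * g x"], intro conjI allI)
    show "polyfun (\<lambda>x. f x * h2 x + h1 x * g x)" using h pmul by (auto intro: polyfun.intros)
    fix x
    show "((\<lambda>t. f (x + t *\<^sub>R axis i 1) * g (x + t *\<^sub>R axis i 1)) has_real_derivative f x * h2 x + h1 x * g x) (at 0)"
      using DERIV_mult[OF h(2)[rule_format, of x] h(4)[rule_format, of x]] by (simp add: algebra_simps)
  qed
qed

lemma polyfun_partial: "polyfun f \<Longrightarrow> polyfun (partial i f)"
proof -
  assume "polyfun f"
  then obtain h where "polyfun h" "\<forall>x. ((\<lambda>t. f (x + t *\<^sub>R axis i 1)) has_real_derivative h x) (at 0)"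
    using polyfun_deriv by blast
  moreover have "partial i f = h" using calculation(2) by (auto intro!: partial_I)
  ultimately show ?thesis by simp
qed

lemma polyfun_partials: "polyfun f \<Longrightarrow> polyfun (partials is f)"
  by (induction "is") (auto intro: polyfun_partial)

lemma polyfun_differentiable: "polyfun f \<Longrightarrow> f differentiable (at x)"
proof (induction rule: polyfun.induct)
  case (pcoord k)
  show ?case by (rule bounded_linear_imp_differentiable) (rule bounded_linear_vec_nth)
qed (auto intro: differentiable_add differentiable_mult)

lemma polyfun_smooth: "polyfun f \<Longrightarrow> smooth_on U f"
  unfolding smooth_on_def
  by (auto intro!: differentiable_at_imp_differentiable_on polyfun_differentiable polyfun_partials)

lemma polyfun_Fm: "polyfun (Fm a b p q s)"
  unfolding Fm_def power2_eq_square by (intro polyfun.intros)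

lemma polyfun_metric: "polyfun (\<lambda>x. paper_metric a b p q s x i j)"
proof (cases "i = 4 \<and> j = 4")
  case True
  then have "(\<lambda>y. paper_metric a b p q s y i j) = Fm a b p q s" by (auto simp: metric_eq)
  then show ?thesis using polyfun_Fm by simp
next
  case False
  then have "(\<lambda>y. paper_metric a b p q s y i j) = (\<lambda>y. paper_metric a b p q s 0 i j)" by (auto simp: metric_eq)
  then show ?thesis by (simp add: pconst)
qed

theorem mainTheorem4:
  fixes U :: "(real^4) set" and a b p q s :: real
  assumes "open U" and "a^2 + b^2 \<noteq> 0"
  shows "class_B U (paper_metric a b p q s)"
  unfolding class_B_def pseudo_riemannian_def
proof (intro conjI ballI allI)
  show "open U" by (rule assms(1))
  show "smooth_on U (\<lambda>x. paper_metric a b p q s x i j)" for i j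
    using polyfun_smooth polyfun_metric by blast
  show "paper_metric a b p q s x i j = paper_metric a b p q s x j i" for x i j
    by (auto simp: paper_metric_def)
  show "det (\<chi> i j. paper_metric a b p q s x i j) \<noteq> 0" for x by (rule det_nz)
  show "nabla_ricci (paper_metric a b p q s) x i j k = nabla_ricci (paper_metric a b p q s) x j i k" for x i j k
    by (simp add: nabla_eq mult.commute mult.left_commute)
qed

end
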